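(* Let $f\in C[0,1]$ satisfy $f(x)\neq0$ for all $x\in[0,1]$. Then for every $n\in\mathbb{N}$, $\overline{\dim}_B G(f^n)=\overline{\dim}_B G(f)$, $\underline{\dim}_B G(f^n)=\underline{\dim}_B G(f)$, $\dim_P G(f^n)=\dim_P G(f)$, $\dim_H G(f^n)=\dim_H G(f)$, and $\dim_A G(f^n)=\dim_A G(f)$.
   Context: $C[0,1]$ is the space of real-valued continuous functions on $[0,1]$; $G(f)=\{(x,f(x)):x\in[0,1]\}\subset\mathbb{R}^2$ is the graph of $f$, and $f^n$ is the pointwise $n$-th power. $\overline{\dim}_B$, $\underline{\dim}_B$, $\dim_P$, $\dim_H$, $\dim_A$ denote the upper box-counting, lower box-counting, packing, Hausdorff and Assouad dimensions of subsets of $\mathbb{R}^2$ (with the Euclidean metric). *)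

theory Defs
  imports "HOL-Analysis.Analysis"
begin

type_synonym pt = "real \<times> real"
(* real \<times> real carries the Euclidean metric: dist (a,b) (c,d) = sqrt((a-c)^2+(b-d)^2) *)

definition graph :: "(real \<Rightarrow> real) \<Rightarrow> pt set" where
  "graph f = (\<lambda>x. (x, f x)) ` {0..1}"

text \<open>N_delta(F): least number of (bounded) sets of diameter at most delta covering F
  (infinity if no finite cover exists).\<close>
definition cover_num :: "pt set \<Rightarrow> real \<Rightarrow> ereal" where
  "cover_num F \<delta> = Inf {ereal (real (card C)) | C. finite C \<and>
       (\<forall>U\<in>C. bounded U \<and> diameter U \<le> \<delta>) \<and> F \<subseteq> \<Union>C}"

definition upper_box_dim :: "pt set \<Rightarrow> ereal" where
  "upper_box_dim F = Limsup (at_right 0)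
      (\<lambda>\<delta>. ereal (ln (real_of_ereal (cover_num F \<delta>)) / - ln \<delta>))"

definition lower_box_dim :: "pt set \<Rightarrow> ereal" where
  "lower_box_dim F = Liminf (at_right 0)
      (\<lambda>\<delta>. ereal (ln (real_of_ereal (cover_num F \<delta>)) / - ln \<delta>))"

definition hausdorff_content :: "real \<Rightarrow> real \<Rightarrow> pt set \<Rightarrow> ennreal" where
  "hausdorff_content s \<delta> F = (INF A \<in> {A :: nat \<Rightarrow> pt set. F \<subseteq> (\<Union>i. A i) \<and>
        (\<forall>i. bounded (A i) \<and> diameter (A i) \<le> \<delta>)}.
        (\<Sum>i. ennreal (diameter (A i) powr s)))"

definition hausdorff_measure :: "real \<Rightarrow> pt set \<Rightarrow> ennreal" where
  "hausdorff_measure s F = (SUP \<delta> \<in> {0<..}. hausdorff_content s \<delta> F)"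

definition hausdorff_dim :: "pt set \<Rightarrow> ereal" where
  "hausdorff_dim F = Inf (ereal ` {s. s \<ge> 0 \<and> hausdorff_measure s F = 0})"

text \<open>Packing measure and dimension (Falconer, Fractal Geometry, Sect. 3.4):
  packings are finite or countable collections of disjoint closed balls with radii
  at most delta and centres in F; |B| = 2r is the diameter of a ball of radius r.\<close>
definition packing_pre :: "real \<Rightarrow> real \<Rightarrow> pt set \<Rightarrow> ennreal" where
  "packing_pre s \<delta> F = (SUP B \<in> {B :: (pt \<times> real) set. countable B \<and>
        (\<forall>(c,r)\<in>B. c \<in> F \<and> 0 < r \<and> r \<le> \<delta>) \<and>
        (\<forall>p\<in>B. \<forall>q\<in>B. p \<noteq> q \<longrightarrow> cball (fst p) (snd p) \<inter> cball (fst q) (snd q) = {})}.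
        (\<Sum>\<^sub>\<infinity>p\<in>B. ennreal ((2 * snd p) powr s)))"

definition packing_premeasure :: "real \<Rightarrow> pt set \<Rightarrow> ennreal" where
  "packing_premeasure s F = (INF \<delta> \<in> {0<..}. packing_pre s \<delta> F)"

definition packing_measure :: "real \<Rightarrow> pt set \<Rightarrow> ennreal" where
  "packing_measure s F = (INF A \<in> {A :: nat \<Rightarrow> pt set. F \<subseteq> (\<Union>i. A i)}.
        (\<Sum>i. packing_premeasure s (A i)))"

definition packing_dim :: "pt set \<Rightarrow> ereal" where
  "packing_dim F = Inf (ereal ` {s. s \<ge> 0 \<and> packing_measure s F = 0})"

definition assouad_dim :: "pt set \<Rightarrow> ereal" where
  "assouad_dim F = Inf (ereal ` {\<alpha>. \<alpha> \<ge> 0 \<and> (\<exists>C>0. \<forall>r R x. 0 < r \<and> r < R \<and> x \<in> F \<longrightarrow>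
        cover_num (ball x R \<inter> F) r \<le> ereal (C * (R / r) powr \<alpha>))})"

end

theory Submission
  imports Defs
begin


definition lip :: "pt set \<Rightarrow> (pt \<Rightarrow> pt) \<Rightarrow> real \<Rightarrow> bool" where
  "lip F g L \<longleftrightarrow> L \<ge> 1 \<and> (\<forall>p\<in>F. \<forall>q\<in>F. dist (g p) (g q) \<le> L * dist p q)"

lemma image_bd:
  assumes "lip F g L" "S \<subseteq> F" "bounded S"
  shows "bounded (g ` S) \<and> diameter (g ` S) \<le> L * diameter S"
proof (cases "S = {}")
  case True then show ?thesis using assms by (simp add: lip_def)
next
  case False
  then obtain a where a: "a \<in> S" by blast
  have L: "L \<ge> 1" and d: "\<And>p q. p \<in> S \<Longrightarrow> q \<in> S \<Longrightarrow> dist (g p) (g q) \<le> L * dist p q"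
    using assms unfolding lip_def by auto
  have dd: "\<And>p q. p \<in> S \<Longrightarrow> q \<in> S \<Longrightarrow> dist (g p) (g q) \<le> L * diameter S"
  proof -
    fix p q assume "p \<in> S" "q \<in> S"
    then have "dist p q \<le> diameter S" using diameter_bounded_bound assms(3) by blast
    then show "dist (g p) (g q) \<le> L * diameter S"
      using d[OF \<open>p\<in>S\<close> \<open>q\<in>S\<close>] L by (meson dual_order.trans mult_left_mono less_le_trans zero_less_one less_imp_le)
  qed
  have "g ` S \<subseteq> cball (g a) (L * diameter S)" by (intro image_subsetI) (simp add: mem_cball dd a)
  then have "bounded (g ` S)" using bounded_cball bounded_subset by blast
  moreover have "diameter (g ` S) \<le> L * diameter S"
    by (rule diameter_le) (use False dd in \<open>auto simp: dist_norm\<close>)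
  ultimately show ?thesis by blast
qed

lemma cover_img:
  assumes "lip F g L" "E \<subseteq> F"
  shows "cover_num (g ` E) (L * \<delta>) \<le> cover_num E \<delta>"
  unfolding cover_num_def
proof (rule Inf_greatest)
  have L: "L \<ge> 1" using assms unfolding lip_def by auto
  fix y assume "y \<in> {ereal (real (card C)) |C. finite C \<and> (\<forall>U\<in>C. bounded U \<and> diameter U \<le> \<delta>) \<and> E \<subseteq> \<Union> C}"
  then obtain C where C: "y = ereal (real (card C))" "finite C" "\<forall>U\<in>C. bounded U \<and> diameter U \<le> \<delta>" "E \<subseteq> \<Union> C"
    by blast
  define C' where "C' = (\<lambda>U. g ` (U \<inter> E)) ` C"
  have "finite C'" using C unfolding C'_def by simp
  moreover have "card C' \<le> card C" unfolding C'_def using C by (simp add: card_image_le)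
  moreover have "\<forall>U\<in>C'. bounded U \<and> diameter U \<le> L * \<delta>"
  proof
    fix U' assume "U' \<in> C'"
    then obtain U where U: "U \<in> C" "U' = g ` (U \<inter> E)" unfolding C'_def by blast
    have b: "bounded (U \<inter> E)" using C U bounded_subset by blast
    have "diameter (U \<inter> E) \<le> diameter U" using C U diameter_subset by blast
    then have "diameter (U \<inter> E) \<le> \<delta>" using C U by force
    moreover have "bounded U' \<and> diameter U' \<le> L * diameter (U \<inter> E)"
      using image_bd[OF assms(1) _ b] assms(2) U by blast
    ultimately show "bounded U' \<and> diameter U' \<le> L * \<delta>"
      using L by (meson mult_left_mono order_trans zero_le_one le_trans)
  qed
  moreover have "g ` E \<subseteq> \<Union> C'" using C unfolding C'_def by blast
  ultimately have "ereal (real (card C')) \<in> {ereal (real (card C)) |C. finite C \<and> (\<forall>U\<in>C. bounded U \<and> diameter U \<le> L * \<delta>) \<and> g ` E \<subseteq> \<Union> C}"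
    by blast
  then have "Inf {ereal (real (card C)) |C. finite C \<and> (\<forall>U\<in>C. bounded U \<and> diameter U \<le> L * \<delta>) \<and> g ` E \<subseteq> \<Union> C} \<le> ereal (real (card C'))"
    by (rule Inf_lower)
  also have "\<dots> \<le> y" using C \<open>card C' \<le> card C\<close> by simp
  finally show "Inf {ereal (real (card C)) |C. finite C \<and> (\<forall>U\<in>C. bounded U \<and> diameter U \<le> L * \<delta>) \<and> g ` E \<subseteq> \<Union> C} \<le> y" .
qed

lemma cover_mono:
  assumes "E \<subseteq> E'" shows "cover_num E \<delta> \<le> cover_num E' \<delta>"
  unfolding cover_num_def by (rule Inf_superset_mono) (use assms in blast)

lemma cover_ge1:
  assumes "F \<noteq> {}" shows "1 \<le> cover_num F \<delta>"
  unfolding cover_num_def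
proof (rule Inf_greatest)
  fix y assume "y \<in> {ereal (real (card C)) |C. finite C \<and> (\<forall>U\<in>C. bounded U \<and> diameter U \<le> \<delta>) \<and> F \<subseteq> \<Union> C}"
  then obtain C where C: "y = ereal (real (card C))" "finite C" "F \<subseteq> \<Union> C" by blast
  then have "C \<noteq> {}" using assms by auto
  then have "card C \<ge> 1" using C by (simp add: Suc_leI card_gt_0_iff)
  then show "1 \<le> y" using C by simp
qed

lemma cover_fin:
  assumes "compact F" "\<delta> > 0" shows "cover_num F \<delta> < \<infinity>"
proof -
  obtain S' where S': "S' \<subseteq> F" "finite S'" "F \<subseteq> \<Union> ((\<lambda>x. ball x (\<delta>/2)) ` S')"
    by (rule compactE_image[OF assms(1), of F "\<lambda>x. ball x (\<delta>/2)"]) (use assms in auto)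
  define C where "C = (\<lambda>x. ball x (\<delta>/2)) ` S'"
  have "\<forall>U\<in>C. bounded U \<and> diameter U \<le> \<delta>"
  proof
    fix U assume "U \<in> C"
    then obtain x where U: "U = ball x (\<delta>/2)" unfolding C_def by blast
    have "diameter U \<le> diameter (cball x (\<delta>/2))"
      unfolding U by (rule diameter_subset) auto
    then show "bounded U \<and> diameter U \<le> \<delta>" using U assms by (simp add: diameter_cball)
  qed
  then have "ereal (real (card C)) \<in> {ereal (real (card C)) |C. finite C \<and> (\<forall>U\<in>C. bounded U \<and> diameter U \<le> \<delta>) \<and> F \<subseteq> \<Union> C}"
    using S' unfolding C_def by blast
  then have "cover_num F \<delta> \<le> ereal (real (card C))" unfolding cover_num_def by (rule Inf_lower)
  then show ?thesis by (rule le_less_trans) simp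
qed



lemma real_ineq:
  fixes A B d L e :: real
  assumes "0 \<le> A" "A \<le> B" "0 < d" "d < 1" "L \<ge> 1" "e > 0" "ln L \<le> e * (- ln d)"
  shows "A / (- ln d) \<le> (1 + e) * (B / (- ln (d / L)))"
proof -
  define t where "t = - ln d"
  define u where "u = ln L"
  have t: "t > 0" using assms unfolding t_def by simp
  have u: "u \<ge> 0" using assms unfolding u_def by simp
  have lnd: "- ln (d / L) = t + u" unfolding t_def u_def using assms by (simp add: ln_div)
  have ue: "u \<le> e * t" using assms unfolding t_def u_def by simp
  have "A * (t + u) \<le> B * (t + u)" using assms u t by (intro mult_right_mono) auto
  also have "\<dots> \<le> B * (t + e * t)" using ue assms by (intro mult_left_mono) auto
  finally have "A * (t + u) \<le> (1 + e) * B * t" by (simp add: algebra_simps)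
  then have "A / t \<le> (1 + e) * B / (t + u)" using t u by (simp add: divide_simps)
  then show ?thesis unfolding lnd t_def by simp
qed

lemma ereal_eps_mult:
  fixes U V :: ereal
  assumes "\<And>e. e > 0 \<Longrightarrow> U \<le> ereal (1 + e) * V"
  shows "U \<le> V"
proof (cases V)
  case (real v)
  show ?thesis
  proof (cases "v \<le> 0")
    case True
    have "U \<le> ereal (1 + 1) * V" using assms[of 1] by simp
    also have "\<dots> \<le> V" using True real by simp
    finally show ?thesis .
  next
    case False
    show ?thesis
    proof (rule ereal_le_epsilon2)
      fix e :: real assume "e > 0"
      have "U \<le> ereal (1 + e / v) * V" using assms[of "e/v"] False \<open>e>0\<close> by simp
      also have "\<dots> = V + ereal e" using real False by (simp add: field_simps)
      finally show "U \<le> V + ereal e" .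
    qed
  qed
next
  case PInf then show ?thesis by simp
next
  case MInf
  then show ?thesis using assms[of 1] by simp
qed

definition phi :: "pt set \<Rightarrow> real \<Rightarrow> ereal" where
  "phi X \<delta> = ereal (ln (real_of_ereal (cover_num X \<delta>)) / - ln \<delta>)"

lemma box_step:
  assumes "compact F" "F \<noteq> {}" "lip F g L" "e > 0"
  shows "eventually (\<lambda>\<delta>. phi (g ` F) \<delta> \<le> ereal (1 + e) * phi F ((1/L) * \<delta>)) (at_right 0)"
proof -
  have L: "L \<ge> 1" using assms unfolding lip_def by auto
  define d0 where "d0 = min 1 (exp (- ln L / e))"
  have d0: "d0 > 0" unfolding d0_def by simp
  have ev: "eventually (\<lambda>\<delta>. 0 < \<delta> \<and> \<delta> < d0) (at_right 0)"
    unfolding eventually_at_right_field using d0 by blast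
  show ?thesis
  proof (rule eventually_mono[OF ev], safe)
    fix \<delta> :: real assume "0 < \<delta>" "\<delta> < d0"
    then have d1: "\<delta> < 1" and d2: "\<delta> < exp (- ln L / e)" unfolding d0_def by auto
    have "ln \<delta> < - ln L / e" using d2 \<open>0<\<delta>\<close> by (metis ln_exp ln_less_cancel_iff exp_gt_zero)
    then have lnL: "ln L \<le> e * (- ln \<delta>)" using assms(4) by (simp add: field_simps)
    have dL: "0 < (1/L) * \<delta>" using L \<open>0<\<delta>\<close> by simp
    have "cover_num (g ` F) (L * ((1/L) * \<delta>)) \<le> cover_num F ((1/L) * \<delta>)"
      by (rule cover_img[OF assms(3)]) simp
    then have le: "cover_num (g ` F) \<delta> \<le> cover_num F ((1/L) * \<delta>)" using L by simp
    have g1: "1 \<le> cover_num (g ` F) \<delta>" using assms(2) by (intro cover_ge1) simp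
    have f1: "1 \<le> cover_num F ((1/L) * \<delta>)" using assms(2) by (intro cover_ge1)
    have ff: "cover_num F ((1/L) * \<delta>) < \<infinity>" using cover_fin[OF assms(1) dL] .
    define a where "a = real_of_ereal (cover_num (g ` F) \<delta>)"
    define b where "b = real_of_ereal (cover_num F ((1/L) * \<delta>))"
    have gf: "cover_num (g ` F) \<delta> < \<infinity>" using le_less_trans[OF le ff] .
    have ea: "cover_num (g ` F) \<delta> = ereal a" unfolding a_def using g1 gf
      by (cases "cover_num (g ` F) \<delta>") auto
    have eb: "cover_num F ((1/L) * \<delta>) = ereal b" unfolding b_def using f1 ff
      by (cases "cover_num F ((1/L) * \<delta>)") auto
    have a1: "1 \<le> a" and ab: "a \<le> b" using g1 le unfolding ea eb by auto
    have "ln a \<le> ln b" using a1 ab by simp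
    moreover have "0 \<le> ln a" using a1 by simp
    ultimately have "ln a / (- ln \<delta>) \<le> (1 + e) * (ln b / (- ln ((1/L) * \<delta>)))"
      using real_ineq[of "ln a" "ln b" \<delta> L e, OF _ _ \<open>0<\<delta>\<close> d1 L assms(4) lnL] by simp
    then show "phi (g ` F) \<delta> \<le> ereal (1 + e) * phi F ((1/L) * \<delta>)"
      unfolding phi_def a_def[symmetric] b_def[symmetric] by simp
  qed
qed
lemma shift_at_right:
  assumes "L \<ge> 1"
  shows "Limsup (at_right 0) (\<lambda>\<delta>. h ((1/L) * \<delta>)) = Limsup (at_right (0::real)) (h :: real \<Rightarrow> ereal)"
    and "Liminf (at_right 0) (\<lambda>\<delta>. h ((1/L) * \<delta>)) = Liminf (at_right (0::real)) h"
proof -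
  have i: "inj ((*) (1/L))" using assms by (intro injI) simp
  have fm: "filtermap ((*) (1/L)) (at_right 0) = at_right (0::real)"
    using filtermap_times_pos_at_right[of "1/L" 0] assms by simp
  show "Limsup (at_right 0) (\<lambda>\<delta>. h ((1/L) * \<delta>)) = Limsup (at_right (0::real)) h"
    using Limsup_filtermap_eq[OF i, of "at_right 0" h] fm by simp
  show "Liminf (at_right 0) (\<lambda>\<delta>. h ((1/L) * \<delta>)) = Liminf (at_right (0::real)) h"
    using Liminf_filtermap_eq[OF i, of "at_right 0" h] fm by simp
qed

lemma box_le:
  assumes "compact F" "F \<noteq> {}" "lip F g L"
  shows "upper_box_dim (g ` F) \<le> upper_box_dim F \<and> lower_box_dim (g ` F) \<le> lower_box_dim F"
proof -
  have L: "L \<ge> 1" using assms unfolding lip_def by auto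
  have ub: "upper_box_dim X = Limsup (at_right 0) (phi X)" for X
    unfolding upper_box_dim_def phi_def ..
  have lb: "lower_box_dim X = Liminf (at_right 0) (phi X)" for X
    unfolding lower_box_dim_def phi_def ..
  have nb: "at_right (0::real) \<noteq> bot" by simp
  have "Limsup (at_right 0) (phi (g ` F)) \<le> Limsup (at_right 0) (phi F)"
  proof (rule ereal_eps_mult)
    fix e :: real assume e: "e > 0"
    have "Limsup (at_right 0) (phi (g ` F)) \<le> Limsup (at_right 0) (\<lambda>\<delta>. ereal (1 + e) * phi F ((1/L) * \<delta>))"
      by (rule Limsup_mono[OF box_step[OF assms e]])
    also have "\<dots> = ereal (1 + e) * Limsup (at_right 0) (\<lambda>\<delta>. phi F ((1/L) * \<delta>))"
      by (rule Limsup_ereal_mult_left[OF nb]) (use e in simp)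
    also have "\<dots> = ereal (1 + e) * Limsup (at_right 0) (phi F)"
      using shift_at_right(1)[OF L, of "phi F"] by simp
    finally show "Limsup (at_right 0) (phi (g ` F)) \<le> ereal (1 + e) * Limsup (at_right 0) (phi F)" .
  qed
  moreover have "Liminf (at_right 0) (phi (g ` F)) \<le> Liminf (at_right 0) (phi F)"
  proof (rule ereal_eps_mult)
    fix e :: real assume e: "e > 0"
    have "Liminf (at_right 0) (phi (g ` F)) \<le> Liminf (at_right 0) (\<lambda>\<delta>. ereal (1 + e) * phi F ((1/L) * \<delta>))"
      by (rule Liminf_mono[OF box_step[OF assms e]])
    also have "\<dots> = ereal (1 + e) * Liminf (at_right 0) (\<lambda>\<delta>. phi F ((1/L) * \<delta>))"
      by (rule Liminf_ereal_mult_left[OF nb]) (use e in simp)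
    also have "\<dots> = ereal (1 + e) * Liminf (at_right 0) (phi F)"
      using shift_at_right(2)[OF L, of "phi F"] by simp
    finally show "Liminf (at_right 0) (phi (g ` F)) \<le> ereal (1 + e) * Liminf (at_right 0) (phi F)" .
  qed
  ultimately show ?thesis unfolding ub lb by blast
qed



lemma INF_mult_le:
  fixes u :: "'a \<Rightarrow> ennreal" and v :: "'b \<Rightarrow> ennreal"
  assumes "\<And>a. a \<in> S \<Longrightarrow> \<exists>b\<in>T. v b \<le> ennreal k * u a" "k > 0"
  shows "Inf (v ` T) \<le> ennreal k * Inf (u ` S)"
proof (cases "Inf (u ` S) = \<infinity>")
  case True then show ?thesis using assms(2) by (simp add: ennreal_mult_top)
next
  case False
  show ?thesis
  proof (rule ennreal_le_epsilon)
    fix e :: real assume e: "0 < e"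
    obtain a where a: "a \<in> S" "u a < Inf (u ` S) + ennreal (e / k)"
      using INF_approx_ennreal[of "e/k" "Inf (u ` S)" u S] False e assms(2) by auto
    obtain b where b: "b \<in> T" "v b \<le> ennreal k * u a" using assms(1)[OF a(1)] by blast
    have "Inf (v ` T) \<le> v b" using b by (simp add: INF_lower)
    also have "\<dots> \<le> ennreal k * u a" by (rule b(2))
    also have "\<dots> \<le> ennreal k * (Inf (u ` S) + ennreal (e / k))"
      using a(2) by (intro mult_left_mono) auto
    also have "\<dots> = ennreal k * Inf (u ` S) + ennreal e"
      using assms(2) e by (simp add: distrib_left ennreal_mult[symmetric])
    finally show "Inf (v ` T) \<le> ennreal k * Inf (u ` S) + ennreal e" .
  qed
qed

lemma hausdorff_zero:
  assumes "lip F g L" "s \<ge> 0" "hausdorff_measure s F = 0"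
  shows "hausdorff_measure s (g ` F) = 0"
proof -
  have L: "L \<ge> 1" using assms unfolding lip_def by auto
  have c0: "hausdorff_content s \<delta> F = 0" if "\<delta> > 0" for \<delta>
  proof -
    have "hausdorff_content s \<delta> F \<le> hausdorff_measure s F"
      unfolding hausdorff_measure_def using that by (intro SUP_upper) auto
    then show ?thesis using assms(3) by simp
  qed
  have "hausdorff_content s \<delta> (g ` F) = 0" if d: "\<delta> > 0" for \<delta>
  proof -
    have "hausdorff_content s \<delta> (g ` F) \<le> ennreal (L powr s) * hausdorff_content s (\<delta> / L) F"
      unfolding hausdorff_content_def
    proof (rule INF_mult_le)
      fix A assume "A \<in> {A :: nat \<Rightarrow> pt set. F \<subseteq> (\<Union>i. A i) \<and> (\<forall>i. bounded (A i) \<and> diameter (A i) \<le> \<delta> / L)}"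
      then have A: "F \<subseteq> (\<Union>i. A i)" "\<And>i. bounded (A i)" "\<And>i. diameter (A i) \<le> \<delta> / L" by auto
      define B where "B i = g ` (A i \<inter> F)" for i
      have Bi: "bounded (B i) \<and> diameter (B i) \<le> L * diameter (A i)" for i
      proof -
        have "bounded (A i \<inter> F)" using A(2) bounded_subset by blast
        then have "bounded (B i) \<and> diameter (B i) \<le> L * diameter (A i \<inter> F)"
          unfolding B_def by (intro image_bd[OF assms(1)]) auto
        moreover have "diameter (A i \<inter> F) \<le> diameter (A i)" using A(2) by (intro diameter_subset) auto
        ultimately show ?thesis using L by (meson mult_left_mono order_trans zero_le_one le_trans)
      qed
      have "B \<in> {A :: nat \<Rightarrow> pt set. g ` F \<subseteq> (\<Union>i. A i) \<and> (\<forall>i. bounded (A i) \<and> diameter (A i) \<le> \<delta>)}"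
      proof -
        have cov: "g ` F \<subseteq> (\<Union>i. B i)" using A(1) unfolding B_def by blast
        have "\<forall>i. bounded (B i) \<and> diameter (B i) \<le> \<delta>"
        proof
          fix i
          have "L * diameter (A i) \<le> L * (\<delta> / L)" using A(3)[of i] L by (intro mult_left_mono) auto
          then show "bounded (B i) \<and> diameter (B i) \<le> \<delta>" using Bi[of i] L by simp
        qed
        then show ?thesis using cov by simp
      qed
      moreover have "(\<Sum>i. ennreal (diameter (B i) powr s)) \<le> ennreal (L powr s) * (\<Sum>i. ennreal (diameter (A i) powr s))"
      proof -
        have "ennreal (diameter (B i) powr s) \<le> ennreal (L powr s) * ennreal (diameter (A i) powr s)" for i
        proof -
          have "diameter (B i) powr s \<le> (L * diameter (A i)) powr s"
            using Bi[of i] assms(2) diameter_ge_0[of "B i"] by (intro powr_mono2) auto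
          also have "\<dots> = L powr s * diameter (A i) powr s"
            using L diameter_ge_0[OF A(2)[of i]] by (simp add: powr_mult)
          finally show ?thesis by (simp add: ennreal_mult[symmetric] ennreal_leI)
        qed
        then have "(\<Sum>i. ennreal (diameter (B i) powr s)) \<le> (\<Sum>i. ennreal (L powr s) * ennreal (diameter (A i) powr s))"
          by (intro suminf_le) auto
        then show ?thesis by simp
      qed
      ultimately show "\<exists>b\<in>{A :: nat \<Rightarrow> pt set. g ` F \<subseteq> (\<Union>i. A i) \<and> (\<forall>i. bounded (A i) \<and> diameter (A i) \<le> \<delta>)}.
          (\<Sum>i. ennreal (diameter (b i) powr s)) \<le> ennreal (L powr s) * (\<Sum>i. ennreal (diameter (A i) powr s))"
        by blast
    next
      show "0 < L powr s" using L by simp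
    qed
    also have "\<dots> = 0" using c0[of "\<delta>/L"] d L by simp
    finally show ?thesis by simp
  qed
  then show ?thesis unfolding hausdorff_measure_def
    by (metis (no_types, lifting) SUP_bot_conv(2) bot_ennreal greaterThan_iff)
qed



lemma cball_meet:
  fixes c c' :: pt
  assumes "dist c c' \<le> r + r'" "0 \<le> r" "0 \<le> r'"
  shows "cball c r \<inter> cball c' r' \<noteq> {}"
proof (cases "r + r' = 0")
  case True
  then have "c = c'" "r = 0" using assms by auto
  then show ?thesis using assms by auto
next
  case False
  then have pos: "r + r' > 0" using assms by simp
  define t where "t = r / (r + r')"
  define z where "z = c + t *\<^sub>R (c' - c)"
  have t: "0 \<le> t" "t \<le> 1" "1 - t = r' / (r + r')" using pos assms unfolding t_def by (auto simp: field_simps)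
  have "dist c z = t * dist c c'" unfolding z_def dist_norm using t by (simp add: norm_minus_commute)
  also have "\<dots> \<le> t * (r + r')" using assms t by (intro mult_left_mono) auto
  also have "\<dots> = r" using pos unfolding t_def by simp
  finally have 1: "z \<in> cball c r" by simp
  have "c' - z = (1 - t) *\<^sub>R (c' - c)" unfolding z_def by (simp add: algebra_simps)
  then have "dist c' z = (1 - t) * dist c c'" using t pos assms by (simp add: dist_norm norm_minus_commute)
  also have "\<dots> \<le> (1 - t) * (r + r')" using assms t by (intro mult_left_mono) auto
  also have "\<dots> = r'" using pos t(3) by simp
  finally have 2: "z \<in> cball c' r'" by simp
  from 1 2 show ?thesis by blast
qed

lemma infsum_cmult_ennreal:
  fixes f :: "'a \<Rightarrow> ennreal"
  assumes "c < top"
  shows "infsum (\<lambda>x. c * f x) A = c * infsum f A"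
proof (rule infsumI)
  have "(f has_sum infsum f A) A" by (rule has_sum_infsum) (simp add: nonneg_summable_on_complete)
  then have "(sum f \<longlongrightarrow> infsum f A) (finite_subsets_at_top A)"
    unfolding has_sum_def .
  then have "((\<lambda>F. c * sum f F) \<longlongrightarrow> c * infsum f A) (finite_subsets_at_top A)"
    by (rule ennreal_tendsto_cmult[OF assms])
  then show "((\<lambda>x. c * f x) has_sum c * infsum f A) A"
    unfolding has_sum_def by (simp add: sum_distrib_left)
qed

lemma pre_img:
  assumes "lip F g L" "E \<subseteq> F"
  shows "packing_pre s \<delta> (g ` E) \<le> ennreal (L powr s) * packing_pre s ((1/L) * \<delta>) E"
  unfolding packing_pre_def
proof (rule SUP_least)
  have L: "L \<ge> 1" and gl: "\<And>p q. p \<in> F \<Longrightarrow> q \<in> F \<Longrightarrow> dist (g p) (g q) \<le> L * dist p q"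
    using assms unfolding lip_def by auto
  fix B assume "B \<in> {B :: (pt \<times> real) set. countable B \<and>
        (\<forall>(c,r)\<in>B. c \<in> g ` E \<and> 0 < r \<and> r \<le> \<delta>) \<and>
        (\<forall>p\<in>B. \<forall>q\<in>B. p \<noteq> q \<longrightarrow> cball (fst p) (snd p) \<inter> cball (fst q) (snd q) = {})}"
  then have Bc: "countable B" and Bm: "\<And>c r. (c, r) \<in> B \<Longrightarrow> c \<in> g ` E \<and> 0 < r \<and> r \<le> \<delta>"
    and Bd: "\<And>p q. p \<in> B \<Longrightarrow> q \<in> B \<Longrightarrow> p \<noteq> q \<Longrightarrow> cball (fst p) (snd p) \<inter> cball (fst q) (snd q) = {}"
    by auto
  define \<phi> where "\<phi> p = (inv_into E g (fst p), snd p / L)" for p :: "pt \<times> real"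
  have gi: "g (inv_into E g (fst p)) = fst p" if "p \<in> B" for p
    using Bm[of "fst p" "snd p"] that by (simp add: f_inv_into_f)
  have iE: "inv_into E g (fst p) \<in> E" if "p \<in> B" for p
    using Bm[of "fst p" "snd p"] that by (simp add: inv_into_into)
  have inj: "inj_on \<phi> B"
  proof (rule inj_onI)
    fix p q assume pq: "p \<in> B" "q \<in> B" "\<phi> p = \<phi> q"
    then have "fst p = fst q" using gi[OF pq(1)] gi[OF pq(2)] unfolding \<phi>_def by (metis fst_conv)
    moreover have "snd p = snd q" using pq L unfolding \<phi>_def by simp
    ultimately show "p = q" by (simp add: prod_eq_iff)
  qed
  have mem: "\<phi> ` B \<in> {B :: (pt \<times> real) set. countable B \<and>
        (\<forall>(c,r)\<in>B. c \<in> E \<and> 0 < r \<and> r \<le> (1/L) * \<delta>) \<and>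
        (\<forall>p\<in>B. \<forall>q\<in>B. p \<noteq> q \<longrightarrow> cball (fst p) (snd p) \<inter> cball (fst q) (snd q) = {})}"
  proof -
    have "countable (\<phi> ` B)" using Bc by simp
    moreover have "\<forall>(c,r)\<in>\<phi> ` B. c \<in> E \<and> 0 < r \<and> r \<le> (1/L) * \<delta>"
    proof (rule ballI)
      fix x assume "x \<in> \<phi> ` B"
      then obtain p where p: "p \<in> B" "x = \<phi> p" by blast
      have "snd p / L \<le> \<delta> / L" using Bm[of "fst p" "snd p"] p L by (intro divide_right_mono) auto
      then show "case x of (c, r) \<Rightarrow> c \<in> E \<and> 0 < r \<and> r \<le> (1/L) * \<delta>"
        using iE[OF p(1)] Bm[of "fst p" "snd p"] p L unfolding \<phi>_def by auto
    qed
    moreover have "\<forall>p\<in>\<phi> ` B. \<forall>q\<in>\<phi> ` B. p \<noteq> q \<longrightarrow> cball (fst p) (snd p) \<inter> cball (fst q) (snd q) = {}"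
    proof (intro ballI impI)
      fix p' q' assume "p' \<in> \<phi> ` B" "q' \<in> \<phi> ` B" "p' \<noteq> q'"
      then obtain p q where pq: "p \<in> B" "q \<in> B" "p' = \<phi> p" "q' = \<phi> q" "p \<noteq> q" by blast
      have rp: "0 < snd p" and rq: "0 < snd q" using Bm[of "fst p" "snd p"] Bm[of "fst q" "snd q"] pq by auto
      show "cball (fst p') (snd p') \<inter> cball (fst q') (snd q') = {}"
      proof (rule disjoint_cballI, rule ccontr)
        assume "\<not> snd p' + snd q' < dist (fst p') (fst q')"
        then have "dist (inv_into E g (fst p)) (inv_into E g (fst q)) \<le> (snd p + snd q) / L"
          using pq unfolding \<phi>_def by (simp add: add_divide_distrib)
        then have "L * dist (inv_into E g (fst p)) (inv_into E g (fst q)) \<le> snd p + snd q"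
          using L by (simp add: field_simps)
        moreover have "dist (fst p) (fst q) \<le> L * dist (inv_into E g (fst p)) (inv_into E g (fst q))"
          using gl[of "inv_into E g (fst p)" "inv_into E g (fst q)"] iE[OF pq(1)] iE[OF pq(2)] assms(2)
            gi[OF pq(1)] gi[OF pq(2)] by auto
        ultimately have "dist (fst p) (fst q) \<le> snd p + snd q" by simp
        then have "cball (fst p) (snd p) \<inter> cball (fst q) (snd q) \<noteq> {}"
          using rp rq by (intro cball_meet) auto
        then show False using Bd[OF pq(1,2,5)] by simp
      qed
    qed
    ultimately show ?thesis by blast
  qed
  have "(\<Sum>\<^sub>\<infinity>p\<in>B. ennreal ((2 * snd p) powr s))
      = (\<Sum>\<^sub>\<infinity>p\<in>B. ennreal (L powr s) * ((\<lambda>q. ennreal ((2 * snd q) powr s)) \<circ> \<phi>) p)"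
  proof (rule infsum_cong)
    fix p assume "p \<in> B"
    then have r: "0 < snd p" using Bm[of "fst p" "snd p"] by auto
    have "(2 * snd p) powr s = (L * (2 * (snd p / L))) powr s" using L by simp
    also have "\<dots> = L powr s * (2 * (snd p / L)) powr s" using L r powr_mult[of L "2 * (snd p / L)" s] by simp
    finally show "ennreal ((2 * snd p) powr s) = ennreal (L powr s) * ((\<lambda>q. ennreal ((2 * snd q) powr s)) \<circ> \<phi>) p"
      unfolding \<phi>_def by (simp add: ennreal_mult[symmetric])
  qed
  also have "\<dots> = ennreal (L powr s) * (\<Sum>\<^sub>\<infinity>p\<in>B. ((\<lambda>q. ennreal ((2 * snd q) powr s)) \<circ> \<phi>) p)"
    by (rule infsum_cmult_ennreal) simp
  also have "\<dots> = ennreal (L powr s) * (\<Sum>\<^sub>\<infinity>q\<in>\<phi> ` B. ennreal ((2 * snd q) powr s))"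
    using infsum_reindex[OF inj, of "\<lambda>q. ennreal ((2 * snd q) powr s)"] by (simp add: comp_def)
  also have "\<dots> \<le> ennreal (L powr s) * (SUP B \<in> {B :: (pt \<times> real) set. countable B \<and>
        (\<forall>(c,r)\<in>B. c \<in> E \<and> 0 < r \<and> r \<le> (1/L) * \<delta>) \<and>
        (\<forall>p\<in>B. \<forall>q\<in>B. p \<noteq> q \<longrightarrow> cball (fst p) (snd p) \<inter> cball (fst q) (snd q) = {})}.
        (\<Sum>\<^sub>\<infinity>p\<in>B. ennreal ((2 * snd p) powr s)))"
    by (intro mult_left_mono SUP_upper mem) simp
  finally show "(\<Sum>\<^sub>\<infinity>p\<in>B. ennreal ((2 * snd p) powr s)) \<le> ennreal (L powr s) * (SUP B \<in> {B :: (pt \<times> real) set. countable B \<and>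
        (\<forall>(c,r)\<in>B. c \<in> E \<and> 0 < r \<and> r \<le> (1/L) * \<delta>) \<and>
        (\<forall>p\<in>B. \<forall>q\<in>B. p \<noteq> q \<longrightarrow> cball (fst p) (snd p) \<inter> cball (fst q) (snd q) = {})}.
        (\<Sum>\<^sub>\<infinity>p\<in>B. ennreal ((2 * snd p) powr s)))" .
qed



lemma pre_mono: "E \<subseteq> E' \<Longrightarrow> packing_pre s \<delta> E \<le> packing_pre s \<delta> E'"
  unfolding packing_pre_def by (rule SUP_subset_mono) auto

lemma prem_mono: "E \<subseteq> E' \<Longrightarrow> packing_premeasure s E \<le> packing_premeasure s E'"
  unfolding packing_premeasure_def by (intro INF_mono' pre_mono)

lemma prem_img:
  assumes "lip F g L" "E \<subseteq> F"
  shows "packing_premeasure s (g ` E) \<le> ennreal (L powr s) * packing_premeasure s E"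
  unfolding packing_premeasure_def
proof (rule INF_mult_le)
  have L: "L \<ge> 1" using assms unfolding lip_def by auto
  fix \<delta>' :: real assume "\<delta>' \<in> {0<..}"
  then have "L * \<delta>' \<in> {0<..}" using L by simp
  moreover have "packing_pre s (L * \<delta>') (g ` E) \<le> ennreal (L powr s) * packing_pre s \<delta>' E"
    using pre_img[OF assms, of s "L * \<delta>'"] L by simp
  ultimately show "\<exists>b\<in>{0<..}. packing_pre s b (g ` E) \<le> ennreal (L powr s) * packing_pre s \<delta>' E" by blast
next
  show "0 < L powr s" using assms unfolding lip_def by simp
qed

lemma packing_zero:
  assumes "lip F g L" "packing_measure s F = 0"
  shows "packing_measure s (g ` F) = 0"
proof -
  have L: "L \<ge> 1" using assms unfolding lip_def by auto
  have "packing_measure s (g ` F) \<le> ennreal (L powr s) * packing_measure s F"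
    unfolding packing_measure_def
  proof (rule INF_mult_le)
    fix A assume "A \<in> {A :: nat \<Rightarrow> pt set. F \<subseteq> (\<Union>i. A i)}"
    then have A: "F \<subseteq> (\<Union>i. A i)" by simp
    define B where "B i = g ` (A i \<inter> F)" for i
    have "B \<in> {A :: nat \<Rightarrow> pt set. g ` F \<subseteq> (\<Union>i. A i)}" using A unfolding B_def by blast
    moreover have "(\<Sum>i. packing_premeasure s (B i)) \<le> ennreal (L powr s) * (\<Sum>i. packing_premeasure s (A i))"
    proof -
      have "packing_premeasure s (B i) \<le> ennreal (L powr s) * packing_premeasure s (A i)" for i
      proof -
        have "packing_premeasure s (B i) \<le> ennreal (L powr s) * packing_premeasure s (A i \<inter> F)"
          unfolding B_def by (rule prem_img[OF assms(1)]) auto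
        also have "\<dots> \<le> ennreal (L powr s) * packing_premeasure s (A i)"
          by (intro mult_left_mono prem_mono) auto
        finally show ?thesis .
      qed
      then have "(\<Sum>i. packing_premeasure s (B i)) \<le> (\<Sum>i. ennreal (L powr s) * packing_premeasure s (A i))"
        by (intro suminf_le) auto
      then show ?thesis by simp
    qed
    ultimately show "\<exists>b\<in>{A :: nat \<Rightarrow> pt set. g ` F \<subseteq> (\<Union>i. A i)}.
        (\<Sum>i. packing_premeasure s (b i)) \<le> ennreal (L powr s) * (\<Sum>i. packing_premeasure s (A i))" by blast
  next
    show "0 < L powr s" using L by simp
  qed
  then show ?thesis using assms(2) by simp
qed

lemma hd_le:
  assumes "lip F g L"
  shows "hausdorff_dim (g ` F) \<le> hausdorff_dim F"
  unfolding hausdorff_dim_def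
  by (rule Inf_superset_mono) (use hausdorff_zero[OF assms] in blast)

lemma pd_le:
  assumes "lip F g L"
  shows "packing_dim (g ` F) \<le> packing_dim F"
  unfolding packing_dim_def
  by (rule Inf_superset_mono) (use packing_zero[OF assms] in blast)

lemma ad_le:
  assumes g: "lip F g L" and h: "lip (g ` F) h K" and hg: "\<And>x. x \<in> F \<Longrightarrow> h (g x) = x"
  shows "assouad_dim (g ` F) \<le> assouad_dim F"
  unfolding assouad_dim_def
proof (rule Inf_superset_mono, rule image_mono, rule subsetI)
  have L: "L \<ge> 1" using g unfolding lip_def by auto
  have K: "K \<ge> 1" and hl: "\<And>p q. p \<in> g ` F \<Longrightarrow> q \<in> g ` F \<Longrightarrow> dist (h p) (h q) \<le> K * dist p q"
    using h unfolding lip_def by auto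
  fix \<alpha> assume "\<alpha> \<in> {\<alpha>. \<alpha> \<ge> 0 \<and> (\<exists>C>0. \<forall>r R x. 0 < r \<and> r < R \<and> x \<in> F \<longrightarrow>
        cover_num (ball x R \<inter> F) r \<le> ereal (C * (R / r) powr \<alpha>))}"
  then obtain C where a: "\<alpha> \<ge> 0" and C: "C > 0" and Cb: "\<And>r R x. 0 < r \<Longrightarrow> r < R \<Longrightarrow> x \<in> F \<Longrightarrow>
        cover_num (ball x R \<inter> F) r \<le> ereal (C * (R / r) powr \<alpha>)" by blast
  define C' where "C' = C * (K * L) powr \<alpha>"
  have C': "C' > 0" unfolding C'_def using C K L by simp
  have "\<forall>r R y. 0 < r \<and> r < R \<and> y \<in> g ` F \<longrightarrow>
        cover_num (ball y R \<inter> g ` F) r \<le> ereal (C' * (R / r) powr \<alpha>)"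
  proof (intro allI impI, elim conjE)
    fix r R :: real and y :: pt assume r: "0 < r" "r < R" "y \<in> g ` F"
    then obtain x where x: "x \<in> F" "y = g x" by blast
    have sub: "ball y R \<inter> g ` F \<subseteq> g ` (ball x (K * R) \<inter> F)"
    proof
      fix z assume "z \<in> ball y R \<inter> g ` F"
      then obtain w where w: "w \<in> F" "z = g w" "dist (g x) (g w) < R" using x by auto
      have "dist x w = dist (h (g x)) (h (g w))" using hg w(1) x(1) by simp
      also have "\<dots> \<le> K * dist (g x) (g w)" using hl w(1) x(1) by simp
      also have "\<dots> < K * R" using w(3) K by simp
      finally show "z \<in> g ` (ball x (K * R) \<inter> F)" using w by auto
    qed
    have "cover_num (ball y R \<inter> g ` F) r \<le> cover_num (g ` (ball x (K * R) \<inter> F)) r"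
      by (rule cover_mono[OF sub])
    also have "\<dots> = cover_num (g ` (ball x (K * R) \<inter> F)) (L * (r / L))" using L by simp
    also have "\<dots> \<le> cover_num (ball x (K * R) \<inter> F) (r / L)"
      by (rule cover_img[OF g]) auto
    also have "\<dots> \<le> ereal (C * ((K * R) / (r / L)) powr \<alpha>)"
    proof (rule Cb)
      show "0 < r / L" using r L by simp
      have "r / L \<le> r" using r L by (simp add: divide_le_eq)
      also have "r < R" by (rule r(2))
      also have "R \<le> K * R" using K r by simp
      finally show "r / L < K * R" .
    qed (rule x(1))
    also have "\<dots> = ereal (C' * (R / r) powr \<alpha>)"
    proof -
      have "(K * R) / (r / L) = (K * L) * (R / r)" using L r by (simp add: field_simps)
      then have "((K * R) / (r / L)) powr \<alpha> = (K * L) powr \<alpha> * (R / r) powr \<alpha>"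
        using K L r powr_mult[of "K * L" "R / r" \<alpha>] by (simp add: ac_simps)
      then show ?thesis unfolding C'_def by simp
    qed
    finally show "cover_num (ball y R \<inter> g ` F) r \<le> ereal (C' * (R / r) powr \<alpha>)" .
  qed
  then show "\<alpha> \<in> {\<alpha>. \<alpha> \<ge> 0 \<and> (\<exists>C>0. \<forall>r R x. 0 < r \<and> r < R \<and> x \<in> g ` F \<longrightarrow>
        cover_num (ball x R \<inter> g ` F) r \<le> ereal (C * (R / r) powr \<alpha>))}"
    using a C' by blast
qed



lemma pow_pos_bounds:
  fixes a b m M :: real
  assumes "0 < m" "m \<le> a" "m \<le> b" "a \<le> M" "b \<le> M"
  shows "real n * m ^ (n - 1) * \<bar>a - b\<bar> \<le> \<bar>a ^ n - b ^ n\<bar>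
       \<and> \<bar>a ^ n - b ^ n\<bar> \<le> real n * M ^ (n - 1) * \<bar>a - b\<bar>"
proof -
  define S where "S = (\<Sum>i<n. b ^ (n - Suc i) * a ^ i)"
  have eq: "a ^ n - b ^ n = (a - b) * S" unfolding S_def by (rule power_diff_sumr2)
  have lo: "m ^ (n - 1) \<le> b ^ (n - Suc i) * a ^ i" if "i < n" for i
  proof -
    have "m ^ (n - 1) = m ^ (n - Suc i) * m ^ i" using that by (simp flip: power_add)
    also have "\<dots> \<le> b ^ (n - Suc i) * a ^ i"
      using assms by (intro mult_mono power_mono) auto
    finally show ?thesis .
  qed
  have hi: "b ^ (n - Suc i) * a ^ i \<le> M ^ (n - 1)" if "i < n" for i
  proof -
    have "b ^ (n - Suc i) * a ^ i \<le> M ^ (n - Suc i) * M ^ i"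
      using assms by (intro mult_mono power_mono) auto
    also have "\<dots> = M ^ (n - 1)" using that by (simp flip: power_add)
    finally show ?thesis .
  qed
  have S1: "real n * m ^ (n - 1) \<le> S" unfolding S_def using sum_bounded_below[of "{..<n}" "m ^ (n - 1)"] lo by simp
  have S2: "S \<le> real n * M ^ (n - 1)" unfolding S_def using sum_bounded_above[of "{..<n}" _ "M ^ (n - 1)"] hi by simp
  have S0: "0 \<le> S" using S1 assms by (meson order_trans zero_le_power of_nat_0_le_iff mult_nonneg_nonneg less_imp_le)
  have ab: "\<bar>a ^ n - b ^ n\<bar> = \<bar>a - b\<bar> * S" unfolding eq using S0 by (simp add: abs_mult)
  have "\<bar>a - b\<bar> * (real n * m ^ (n - 1)) \<le> \<bar>a - b\<bar> * S" using S1 by (intro mult_left_mono) auto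
  moreover have "\<bar>a - b\<bar> * S \<le> \<bar>a - b\<bar> * (real n * M ^ (n - 1))" using S2 by (intro mult_left_mono) auto
  ultimately show ?thesis unfolding ab by (simp add: mult.commute)
qed

lemma pow_bounds:
  fixes a b m M :: real
  assumes "0 < m" "m \<le> \<bar>a\<bar>" "m \<le> \<bar>b\<bar>" "\<bar>a\<bar> \<le> M" "\<bar>b\<bar> \<le> M" "(0 < a \<and> 0 < b) \<or> (a < 0 \<and> b < 0)"
  shows "real n * m ^ (n - 1) * \<bar>a - b\<bar> \<le> \<bar>a ^ n - b ^ n\<bar>
       \<and> \<bar>a ^ n - b ^ n\<bar> \<le> real n * M ^ (n - 1) * \<bar>a - b\<bar>"
proof (cases "0 < a")
  case True
  then have "0 < b" using assms(6) by auto
  then show ?thesis using pow_pos_bounds[of m a b M n] assms True by simp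
next
  case False
  then have ab: "a < 0" "b < 0" using assms(6) by auto
  have "\<bar>(-a) ^ n - (-b) ^ n\<bar> = \<bar>a ^ n - b ^ n\<bar>"
  proof -
    have "(-a) ^ n - (-b) ^ n = (-1) ^ n * (a ^ n - b ^ n)"
      by (simp add: power_minus[of a] power_minus[of b] algebra_simps)
    then show ?thesis by (simp add: abs_mult)
  qed
  moreover have "\<bar>(-a) - (-b)\<bar> = \<bar>a - b\<bar>" by simp
  ultimately show ?thesis using pow_pos_bounds[of m "-a" "-b" M n] assms ab by simp
qed

lemma dist_pair_le:
  fixes u u' v v' L :: real
  assumes "\<bar>u'\<bar> \<le> \<bar>u\<bar>" "\<bar>v'\<bar> \<le> L * \<bar>v\<bar>" "L \<ge> 1"
  shows "sqrt (u'^2 + v'^2) \<le> L * sqrt (u^2 + v^2)"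
proof -
  have "u'^2 \<le> u^2" using assms(1) by (metis abs_le_square_iff)
  also have "\<dots> \<le> L^2 * u^2" using assms(3) by (simp add: mult_le_cancel_right1 one_le_power)
  finally have 1: "u'^2 \<le> L^2 * u^2" .
  have "v'^2 \<le> (L * \<bar>v\<bar>)^2" using assms(2) by (metis abs_ge_zero abs_le_square_iff abs_of_nonneg order_trans)
  then have 2: "v'^2 \<le> L^2 * v^2" by (simp add: power_mult_distrib)
  have "sqrt (u'^2 + v'^2) \<le> sqrt (L^2 * (u^2 + v^2))" using 1 2 by (simp add: distrib_left)
  also have "\<dots> = L * sqrt (u^2 + v^2)" using assms(3) by (simp add: real_sqrt_mult)
  finally show ?thesis .
qed



lemma dims_eq:
  assumes "compact F" "F \<noteq> {}" "compact (g ` F)" "lip F g L" "lip (g ` F) h K"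
    "\<And>x. x \<in> F \<Longrightarrow> h (g x) = x"
  shows "upper_box_dim (g ` F) = upper_box_dim F
       \<and> lower_box_dim (g ` F) = lower_box_dim F
       \<and> packing_dim (g ` F) = packing_dim F
       \<and> hausdorff_dim (g ` F) = hausdorff_dim F
       \<and> assouad_dim (g ` F) = assouad_dim F"
proof -
  have hgF: "h ` (g ` F) = F" using assms(6) by (force simp: image_image)
  have gh: "\<And>y. y \<in> g ` F \<Longrightarrow> g (h y) = y" using assms(6) by auto
  have lipg: "lip (h ` (g ` F)) g L" using assms(4) hgF by simp
  have ne: "g ` F \<noteq> {}" using assms(2) by simp
  have b1: "upper_box_dim (g ` F) \<le> upper_box_dim F \<and> lower_box_dim (g ` F) \<le> lower_box_dim F"
    by (rule box_le[OF assms(1,2,4)])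
  have b2: "upper_box_dim (h ` g ` F) \<le> upper_box_dim (g ` F) \<and> lower_box_dim (h ` g ` F) \<le> lower_box_dim (g ` F)"
    by (rule box_le[OF assms(3) ne assms(5)])
  have "hausdorff_dim (g ` F) \<le> hausdorff_dim F" by (rule hd_le[OF assms(4)])
  moreover have "hausdorff_dim (h ` g ` F) \<le> hausdorff_dim (g ` F)" by (rule hd_le[OF assms(5)])
  moreover have "packing_dim (g ` F) \<le> packing_dim F" by (rule pd_le[OF assms(4)])
  moreover have "packing_dim (h ` g ` F) \<le> packing_dim (g ` F)" by (rule pd_le[OF assms(5)])
  moreover have "assouad_dim (g ` F) \<le> assouad_dim F" by (rule ad_le[OF assms(4,5,6)])
  moreover have "assouad_dim (h ` g ` F) \<le> assouad_dim (g ` F)" by (rule ad_le[OF assms(5) lipg gh])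
  ultimately show ?thesis using b1 b2 unfolding hgF by (meson order.antisym)
qed

theorem mainTheorem4:
  fixes f :: "real \<Rightarrow> real" and n :: nat
  assumes "continuous_on {0..1} f"
    and "\<forall>x\<in>{0..1}. f x \<noteq> 0"
    and "n \<ge> 1"
  shows "upper_box_dim (graph (\<lambda>x. f x ^ n)) = upper_box_dim (graph f)
       \<and> lower_box_dim (graph (\<lambda>x. f x ^ n)) = lower_box_dim (graph f)
       \<and> packing_dim (graph (\<lambda>x. f x ^ n)) = packing_dim (graph f)
       \<and> hausdorff_dim (graph (\<lambda>x. f x ^ n)) = hausdorff_dim (graph f)
       \<and> assouad_dim (graph (\<lambda>x. f x ^ n)) = assouad_dim (graph f)"
proof -
  have cI: "compact {0..1::real}" "{0..1::real} \<noteq> {}" by auto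
  have cabs: "continuous_on {0..1} (\<lambda>x. \<bar>f x\<bar>)" using assms(1) by (intro continuous_intros)
  obtain x0 where x0: "x0 \<in> {0..1}" "\<And>y. y \<in> {0..1} \<Longrightarrow> \<bar>f x0\<bar> \<le> \<bar>f y\<bar>"
    using continuous_attains_inf[OF cI cabs] by blast
  obtain x1 where x1: "x1 \<in> {0..1}" "\<And>y. y \<in> {0..1} \<Longrightarrow> \<bar>f y\<bar> \<le> \<bar>f x1\<bar>"
    using continuous_attains_sup[OF cI cabs] by blast
  define m where "m = \<bar>f x0\<bar>"
  define M where "M = \<bar>f x1\<bar>"
  have m: "0 < m" unfolding m_def using assms(2) x0 by auto
  have mM: "\<And>y. y \<in> {0..1} \<Longrightarrow> m \<le> \<bar>f y\<bar> \<and> \<bar>f y\<bar> \<le> M" unfolding m_def M_def using x0 x1 by auto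
  have sgn: "(0 < f x \<and> 0 < f y) \<or> (f x < 0 \<and> f y < 0)" if xy: "x \<in> {0..1}" "y \<in> {0..1}" for x y
  proof (rule ccontr)
    assume "\<not> ?thesis"
    then have "(f x < 0 \<and> 0 < f y) \<or> (0 < f x \<and> f y < 0)"
      using assms(2) xy by (meson linorder_neqE_linordered_idom)
    then obtain a b where ab: "a \<in> {0..1}" "b \<in> {0..1}" "f a < 0" "0 < f b" using xy by blast
    have "\<exists>z\<in>{0..1}. f z = 0"
    proof (cases "a \<le> b")
      case True
      have "continuous_on {a..b} f" by (rule continuous_on_subset[OF assms(1)]) (use ab in auto)
      then obtain z where "a \<le> z" "z \<le> b" "f z = 0" using IVT'[of f a 0 b] ab True by force
      then show ?thesis using ab by (intro bexI[of _ z]) auto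
    next
      case False
      have "continuous_on {b..a} f" by (rule continuous_on_subset[OF assms(1)]) (use ab in auto)
      then obtain z where "b \<le> z" "z \<le> a" "f z = 0" using IVT2'[of f a 0 b] ab False by force
      then show ?thesis using ab by (intro bexI[of _ z]) auto
    qed
    then show False using assms(2) by blast
  qed
  define \<Phi> where "\<Phi> p = (fst p, snd p ^ n)" for p :: pt
  define \<Psi> where "\<Psi> p = (fst p, f (fst p))" for p :: pt
  define L where "L = max 1 (real n * M ^ (n - 1))"
  define K where "K = max 1 (1 / (real n * m ^ (n - 1)))"
  have nm: "0 < real n * m ^ (n - 1)" using m assms(3) by simp
  let ?G = "graph f"
  have G': "graph (\<lambda>x. f x ^ n) = \<Phi> ` ?G" unfolding graph_def \<Phi>_def by (simp add: image_image)
  have cG: "compact ?G" unfolding graph_def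
    by (intro compact_continuous_image continuous_intros assms(1) cI(1))
  have "compact (graph (\<lambda>x. f x ^ n))" unfolding graph_def
    by (intro compact_continuous_image continuous_intros assms(1) cI(1))
  then have cG': "compact (\<Phi> ` ?G)" unfolding G' .
  have neG: "?G \<noteq> {}" unfolding graph_def by simp
  have lip1: "lip ?G \<Phi> L"
    unfolding lip_def
  proof (intro conjI ballI)
    show "1 \<le> L" unfolding L_def by simp
    fix p q assume "p \<in> ?G" "q \<in> ?G"
    then obtain x y where xy: "x \<in> {0..1}" "y \<in> {0..1}" "p = (x, f x)" "q = (y, f y)" unfolding graph_def by blast
    have b: "\<bar>f x ^ n - f y ^ n\<bar> \<le> real n * M ^ (n - 1) * \<bar>f x - f y\<bar>"
      using pow_bounds[of m "f x" "f y" M n] m mM[OF xy(1)] mM[OF xy(2)] sgn[OF xy(1,2)] by blast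
    have "\<bar>f x ^ n - f y ^ n\<bar> \<le> L * \<bar>f x - f y\<bar>"
      using b unfolding L_def by (meson abs_ge_zero max.cobounded2 mult_right_mono order_trans)
    then have "sqrt ((x - y)^2 + (f x ^ n - f y ^ n)^2) \<le> L * sqrt ((x - y)^2 + (f x - f y)^2)"
      by (intro dist_pair_le) (auto simp: L_def)
    then show "dist (\<Phi> p) (\<Phi> q) \<le> L * dist p q"
      unfolding xy \<Phi>_def by (simp add: dist_Pair_Pair dist_real_def)
  qed
  have lip2: "lip (\<Phi> ` ?G) \<Psi> K"
    unfolding lip_def
  proof (intro conjI ballI)
    show "1 \<le> K" unfolding K_def by simp
    fix p q assume "p \<in> \<Phi> ` ?G" "q \<in> \<Phi> ` ?G"
    then obtain x y where xy: "x \<in> {0..1}" "y \<in> {0..1}" "p = (x, f x ^ n)" "q = (y, f y ^ n)"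
      unfolding graph_def \<Phi>_def by auto
    have b: "real n * m ^ (n - 1) * \<bar>f x - f y\<bar> \<le> \<bar>f x ^ n - f y ^ n\<bar>"
      using pow_bounds[of m "f x" "f y" M n] m mM[OF xy(1)] mM[OF xy(2)] sgn[OF xy(1,2)] by blast
    then have "\<bar>f x - f y\<bar> \<le> (1 / (real n * m ^ (n - 1))) * \<bar>f x ^ n - f y ^ n\<bar>"
      using nm by (simp add: field_simps)
    then have "\<bar>f x - f y\<bar> \<le> K * \<bar>f x ^ n - f y ^ n\<bar>"
      unfolding K_def by (meson abs_ge_zero max.cobounded2 mult_right_mono order_trans)
    then have "sqrt ((x - y)^2 + (f x - f y)^2) \<le> K * sqrt ((x - y)^2 + (f x ^ n - f y ^ n)^2)"
      by (intro dist_pair_le) (auto simp: K_def)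
    then show "dist (\<Psi> p) (\<Psi> q) \<le> K * dist p q"
      unfolding xy \<Psi>_def by (simp add: dist_Pair_Pair dist_real_def)
  qed
  have inv: "\<And>p. p \<in> ?G \<Longrightarrow> \<Psi> (\<Phi> p) = p" unfolding graph_def \<Phi>_def \<Psi>_def by auto
  show ?thesis unfolding G' by (rule dims_eq[OF cG neG cG' lip1 lip2 inv])
qed

end
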